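(* Let $F$ be a field of characteristic different from $2$, let $a_1,a_2\in F^\times$ be such that $E=F(\sqrt{a_1},\sqrt{a_2})$ is Galois over $F$ with $G=\mathrm{Gal}(E/F)\cong\mathbb Z/2\mathbb Z\times\mathbb Z/2\mathbb Z$, and let $\sigma_1,\sigma_2\in G$ be the generators with $\sigma_1(\sqrt{a_1})=\sqrt{a_1}$, $\sigma_1(\sqrt{a_2})=-\sqrt{a_2}$, $\sigma_2(\sqrt{a_2})=\sqrt{a_2}$, $\sigma_2(\sqrt{a_1})=-\sqrt{a_1}$. Let $E_1=F(\sqrt{a_1})$, $E_2=F(\sqrt{a_2})$, $E_3=F(\sqrt{a_1a_2})$. Then the following five subsets of $E^\times$ are equal: \begin{align*} K_1&=\ker(1-\sigma_1)(1-\sigma_2)=\{e\in E^\times: e\,\sigma_1\sigma_2(e)=\sigma_1(e)\,\sigma_2(e)\},\\ K_2&=\ker(1-\sigma_1)\cdot\ker(1-\sigma_2),\\ K_3&=\langle E_1^\times,E_2^\times\rangle,\\ K_4&=\{e\in E^\times: N_{E/E_3}(e)\in F^\times\},\\ K_5&=\{e\in E^\times: N_{E/E_3}(e)\in N_{E_1/F}(E_1^\times)\cdot N_{E_2/F}(E_2^\times)\}. \end{align*}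
   Context: $\ker(1-\sigma_i)=\{e\in E^\times: e/\sigma_i(e)=1\}$. For subsets $A,B$ of a multiplicative group, $A\cdot B=\{ab:a\in A,b\in B\}$. $\langle E_1^\times,E_2^\times\rangle$ is the smallest subgroup of $E^\times$ containing $E_1^\times$ and $E_2^\times$. $N_{E/E_3}(e)=e\,\sigma_1\sigma_2(e)$ (note $\mathrm{Gal}(E/E_3)=\{\mathrm{id},\sigma_1\sigma_2\}$), and for $x\in E_i^\times$, $N_{E_i/F}(x)=x\,\bar x$ where $\bar x$ is the conjugate of $x$ over $F$ (i.e. $N_{E_i/F}(f+g\sqrt{a_i})=f^2-a_ig^2$). *)

theory Defs
  imports Main
begin

definition is_subfield :: "'a::field set \<Rightarrow> bool" where
  "is_subfield K \<longleftrightarrow> 0 \<in> K \<and> 1 \<in> K \<and>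
     (\<forall>x\<in>K. \<forall>y\<in>K. x + y \<in> K \<and> x * y \<in> K) \<and>
     (\<forall>x\<in>K. - x \<in> K \<and> inverse x \<in> K)"

definition adjoin :: "'a::field set \<Rightarrow> 'a set \<Rightarrow> 'a set" where
  "adjoin K S = \<Inter>{L. is_subfield L \<and> K \<subseteq> L \<and> S \<subseteq> L}"

definition gal_aut :: "'a::field set \<Rightarrow> 'a set \<Rightarrow> ('a \<Rightarrow> 'a) \<Rightarrow> bool" where
  "gal_aut E F \<sigma> \<longleftrightarrow> bij_betw \<sigma> E E \<and>
     (\<forall>x\<in>E. \<forall>y\<in>E. \<sigma> (x + y) = \<sigma> x + \<sigma> y \<and> \<sigma> (x * y) = \<sigma> x * \<sigma> y) \<and>
     (\<forall>f\<in>F. \<sigma> f = f)"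

definition units_of_field :: "'a::field set \<Rightarrow> 'a set" where
  "units_of_field K = K - {0}"

definition mult_subgroup_gen :: "'a::field set \<Rightarrow> 'a set" where
  "mult_subgroup_gen S = \<Inter>{H. S \<subseteq> H \<and> 1 \<in> H \<and>
      (\<forall>x\<in>H. \<forall>y\<in>H. x * y \<in> H) \<and> (\<forall>x\<in>H. inverse x \<in> H)}"

definition set_mult :: "'a::times set \<Rightarrow> 'a set \<Rightarrow> 'a set" where
  "set_mult A B = {a * b |a b. a \<in> A \<and> b \<in> B}"

text \<open>ker(1 - sigma) = {e in E^x : e / sigma(e) = 1}\<close>
definition ker1m :: "'a::field set \<Rightarrow> ('a \<Rightarrow> 'a) \<Rightarrow> 'a set" where
  "ker1m E \<sigma> = {e \<in> units_of_field E. e / \<sigma> e = 1}"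

end

theory Submission imports Defs begin
lemma sf0: "is_subfield K \<Longrightarrow> 0 \<in> K" by (simp add: is_subfield_def)
lemma sf1: "is_subfield K \<Longrightarrow> 1 \<in> K" by (simp add: is_subfield_def)
lemma sfadd: "is_subfield K \<Longrightarrow> x \<in> K \<Longrightarrow> y \<in> K \<Longrightarrow> x + y \<in> K" by (simp add: is_subfield_def)
lemma sfmult: "is_subfield K \<Longrightarrow> x \<in> K \<Longrightarrow> y \<in> K \<Longrightarrow> x * y \<in> K" by (simp add: is_subfield_def)
lemma sfneg: "is_subfield K \<Longrightarrow> x \<in> K \<Longrightarrow> - x \<in> K" by (simp add: is_subfield_def)
lemma sfinv: "is_subfield K \<Longrightarrow> x \<in> K \<Longrightarrow> inverse x \<in> K" by (simp add: is_subfield_def)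
lemma sfdiff: "is_subfield K \<Longrightarrow> x \<in> K \<Longrightarrow> y \<in> K \<Longrightarrow> x - y \<in> K"
  by (metis sfadd sfneg diff_conv_add_uminus)
lemma sfdiv: "is_subfield K \<Longrightarrow> x \<in> K \<Longrightarrow> y \<in> K \<Longrightarrow> x / y \<in> K"
  by (metis sfmult sfinv divide_inverse)
lemma sfpow: "is_subfield K \<Longrightarrow> x \<in> K \<Longrightarrow> x ^ n \<in> K"
  by (induction n) (auto intro: sf1 sfmult)
lemma sf2: "is_subfield K \<Longrightarrow> (2::'a::field) \<in> K"
  by (metis sfadd sf1 one_add_one)
lemmas sfc = sf0 sf1 sfadd sfmult sfneg sfinv sfdiff sfdiv sfpow sf2

definition quad :: "'a::field set \<Rightarrow> 'a \<Rightarrow> 'a set" where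
  "quad K r = {p + q * r | p q. p \<in> K \<and> q \<in> K}"

lemma quad_base: "is_subfield K \<Longrightarrow> K \<subseteq> quad K r"
  unfolding quad_def by (force intro: sf0)
lemma quad_r: "is_subfield K \<Longrightarrow> r \<in> quad K r"
  unfolding quad_def by (force intro: sf0 sf1)
lemma quad_least: "is_subfield L \<Longrightarrow> K \<subseteq> L \<Longrightarrow> r \<in> L \<Longrightarrow> quad K r \<subseteq> L"
  unfolding quad_def by (auto intro!: sfadd sfmult)

lemma quad_subfield:
  assumes K: "is_subfield K" and r2: "r^2 \<in> K" and rn: "r \<notin> K"
  shows "is_subfield (quad K r)"
proof -
  have inv: "inverse (p + q*r) \<in> quad K r" if p: "p \<in> K" and q: "q \<in> K" for p q
  proof (cases "p^2 - q^2 * r^2 = 0")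
    case True
    have "q = 0"
    proof (rule ccontr)
      assume q0: "q \<noteq> 0"
      have "(r - p/q) * (r + p/q) = 0" using True q0
        by (simp add: field_simps power2_eq_square)
      then have "r - p/q = 0 \<or> r + p/q = 0" by simp
      then have "r = p/q \<or> r = -(p/q)" by (auto simp: algebra_simps eq_neg_iff_add_eq_0)
      then have "r \<in> K" using K p q by (auto intro: sfc)
      then show False using rn by simp
    qed
    then have "p = 0" using True by simp
    then show ?thesis using \<open>q = 0\<close> quad_base[OF K] sf0[OF K] by auto
  next
    case False
    define d where "d = p^2 - q^2 * r^2"
    have dK: "d \<in> K" unfolding d_def using K p q r2 by (auto intro!: sfc)
    have "(p + q*r) * (p - q*r) = d" unfolding d_def by (simp add: algebra_simps power2_eq_square)
    then have "(p + q*r) * (p/d + (-q/d)*r) = 1" using False unfolding d_def[symmetric]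
      by (simp add: field_simps)
    then have "inverse (p + q*r) = p/d + (-q/d)*r" by (rule inverse_unique)
    moreover have "p/d \<in> K" "-q/d \<in> K" using K p q dK by (auto intro!: sfc)
    ultimately show ?thesis unfolding quad_def by blast
  qed
  show ?thesis unfolding is_subfield_def
  proof (intro conjI ballI)
    show "0 \<in> quad K r" "1 \<in> quad K r" using quad_base[OF K] K sf0 sf1 by auto
  next
    fix x y assume "x \<in> quad K r" "y \<in> quad K r"
    then obtain p q p' q' where pq: "p \<in> K" "q \<in> K" "x = p + q*r" "p' \<in> K" "q' \<in> K" "y = p' + q'*r"
      unfolding quad_def by auto
    have "x + y = (p+p') + (q+q')*r" using pq by (simp add: algebra_simps)
    moreover have "(p+p') \<in> K" "q+q' \<in> K" using pq K by (auto intro: sfc)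
    ultimately show "x + y \<in> quad K r" unfolding quad_def by blast
    have "x * y = (p*p' + q*q'*r^2) + (p*q'+q*p')*r" using pq by (simp add: algebra_simps power2_eq_square)
    moreover have "p*p' + q*q'*r^2 \<in> K" "p*q'+q*p' \<in> K" using pq K r2 by (auto intro!: sfc)
    ultimately show "x * y \<in> quad K r" unfolding quad_def by blast
  next
    fix x assume "x \<in> quad K r"
    then obtain p q where pq: "p \<in> K" "q \<in> K" "x = p + q*r" unfolding quad_def by auto
    have "-x = (-p) + (-q)*r" using pq by simp
    moreover have "-p \<in> K" "-q \<in> K" using pq K by (auto intro: sfc)
    ultimately show "-x \<in> quad K r" unfolding quad_def by blast
    show "inverse x \<in> quad K r" using inv pq by simp
  qed
qed

lemma adjoin_subfield: "is_subfield (adjoin K S)"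
  unfolding adjoin_def is_subfield_def by auto
lemma adjoin_base: "K \<subseteq> adjoin K S" "S \<subseteq> adjoin K S"
  unfolding adjoin_def by auto
lemma adjoin_eqI:
  assumes "is_subfield L" "K \<subseteq> L" "S \<subseteq> L"
    and "\<And>L'. is_subfield L' \<Longrightarrow> K \<subseteq> L' \<Longrightarrow> S \<subseteq> L' \<Longrightarrow> L \<subseteq> L'"
  shows "adjoin K S = L"
  unfolding adjoin_def using assms by blast

lemma units_mult: "is_subfield K \<Longrightarrow> x \<in> units_of_field K \<Longrightarrow> y \<in> units_of_field K \<Longrightarrow> x*y \<in> units_of_field K"
  unfolding units_of_field_def by (auto intro: sfc)
lemma units_inv: "is_subfield K \<Longrightarrow> x \<in> units_of_field K \<Longrightarrow> inverse x \<in> units_of_field K"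
  unfolding units_of_field_def by (auto intro: sfc)
lemma units_one: "is_subfield K \<Longrightarrow> 1 \<in> units_of_field K"
  unfolding units_of_field_def by (auto intro: sfc)

lemma gen_prod:
  assumes A: "is_subfield A" and B: "is_subfield B"
  shows "mult_subgroup_gen (units_of_field A \<union> units_of_field B) = set_mult (units_of_field A) (units_of_field B)"
proof
  let ?U = "units_of_field A" and ?V = "units_of_field B"
  let ?P = "set_mult ?U ?V"
  have "?U \<union> ?V \<subseteq> ?P \<and> 1 \<in> ?P \<and> (\<forall>x\<in>?P. \<forall>y\<in>?P. x * y \<in> ?P) \<and> (\<forall>x\<in>?P. inverse x \<in> ?P)"
  proof (intro conjI ballI subsetI)
    fix x assume "x \<in> ?U \<union> ?V"
    then show "x \<in> ?P"
    proof
      assume "x \<in> ?U" then show ?thesis unfolding set_mult_def using units_one[OF B]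
        by (metis (mono_tags, lifting) mem_Collect_eq mult.right_neutral)
    next
      assume "x \<in> ?V" then show ?thesis unfolding set_mult_def using units_one[OF A]
        by (metis (mono_tags, lifting) mem_Collect_eq mult_1)
    qed
  next
    show "1 \<in> ?P" unfolding set_mult_def using units_one[OF A] units_one[OF B]
      by (metis (mono_tags, lifting) mem_Collect_eq mult_1)
  next
    fix x y assume "x \<in> ?P" "y \<in> ?P"
    then obtain a b c d where "a \<in> ?U" "b \<in> ?V" "c \<in> ?U" "d \<in> ?V" "x = a*b" "y = c*d"
      unfolding set_mult_def by auto
    moreover have "a*b*(c*d) = (a*c)*(b*d)" by (simp add: ac_simps)
    ultimately show "x*y \<in> ?P" unfolding set_mult_def using units_mult[OF A] units_mult[OF B] by fastforce
  next
    fix x assume "x \<in> ?P"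
    then obtain a b where "a \<in> ?U" "b \<in> ?V" "x = a*b"
      unfolding set_mult_def by auto
    moreover have "inverse (a*b) = inverse a * inverse b" by (simp add: inverse_mult_distrib)
    ultimately show "inverse x \<in> ?P" unfolding set_mult_def using units_inv[OF A] units_inv[OF B] by fastforce
  qed
  then show "mult_subgroup_gen (?U \<union> ?V) \<subseteq> ?P" unfolding mult_subgroup_gen_def by blast
next
  show "set_mult (units_of_field A) (units_of_field B) \<subseteq> mult_subgroup_gen (units_of_field A \<union> units_of_field B)"
    unfolding mult_subgroup_gen_def set_mult_def by blast
qed

lemma gal_lin:
  assumes "gal_aut E F \<sigma>" "is_subfield E" "F \<subseteq> E" "r1 \<in> E" "r2 \<in> E"
    "x \<in> F" "y \<in> F" "z \<in> F" "w \<in> F"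
  shows "\<sigma> (x + y*r1 + z*r2 + w*(r1*r2)) = x + y*\<sigma> r1 + z*\<sigma> r2 + w*(\<sigma> r1*\<sigma> r2)"
proof -
  have h: "\<And>a b. a \<in> E \<Longrightarrow> b \<in> E \<Longrightarrow> \<sigma> (a+b) = \<sigma> a + \<sigma> b \<and> \<sigma> (a*b) = \<sigma> a * \<sigma> b"
    and f: "\<And>a. a \<in> F \<Longrightarrow> \<sigma> a = a" using assms(1) unfolding gal_aut_def by auto
  have m: "x \<in> E" "y \<in> E" "z \<in> E" "w \<in> E" using assms by auto
  show ?thesis using m assms(2,4,5,6-9)
    by (simp add: h f sfadd sfmult)
qed

theorem theorem4:
  fixes F :: "'a::field set" and a1 a2 r1 r2 :: 'a
    and \<sigma>1 \<sigma>2 :: "'a \<Rightarrow> 'a"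
  defines "E \<equiv> adjoin F {r1, r2}"
    and "E1 \<equiv> adjoin F {r1}"
    and "E2 \<equiv> adjoin F {r2}"
    and "E3 \<equiv> adjoin F {r1 * r2}"
  assumes F: "is_subfield F"
    and char: "(2::'a) \<noteq> 0"
    and a1: "a1 \<in> units_of_field F" and a2: "a2 \<in> units_of_field F"
    and r1: "r1 ^ 2 = a1" and r2: "r2 ^ 2 = a2"
    and s1: "gal_aut E F \<sigma>1" and s1r1: "\<sigma>1 r1 = r1" and s1r2: "\<sigma>1 r2 = - r2"
    and s2: "gal_aut E F \<sigma>2" and s2r2: "\<sigma>2 r2 = r2" and s2r1: "\<sigma>2 r1 = - r1"
  shows
    "let K1 = {e \<in> units_of_field E. e * \<sigma>1 (\<sigma>2 e) = \<sigma>1 e * \<sigma>2 e};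
         K2 = set_mult (ker1m E \<sigma>1) (ker1m E \<sigma>2);
         K3 = mult_subgroup_gen (units_of_field E1 \<union> units_of_field E2);
         K4 = {e \<in> units_of_field E. e * \<sigma>1 (\<sigma>2 e) \<in> units_of_field F};
         K5 = {e \<in> units_of_field E. e * \<sigma>1 (\<sigma>2 e) \<in>
                 set_mult ((\<lambda>x. x * \<sigma>2 x) ` units_of_field E1)
                          ((\<lambda>x. x * \<sigma>1 x) ` units_of_field E2)}
     in K1 = K2 \<and> K2 = K3 \<and> K3 = K4 \<and> K4 = K5"
proof -
  have Esf: "is_subfield E" unfolding E_def by (rule adjoin_subfield)
  have FE: "F \<subseteq> E" and r1E: "r1 \<in> E" and r2E: "r2 \<in> E"
    using adjoin_base[where K=F and S="{r1,r2}"] unfolding E_def by auto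
  have a1F: "a1 \<in> F" "a1 \<noteq> 0" and a2F: "a2 \<in> F" "a2 \<noteq> 0"
    using a1 a2 unfolding units_of_field_def by auto
  have r1nz: "r1 \<noteq> 0" using r1 a1F by auto
  have r2nz: "r2 \<noteq> 0" using r2 a2F by auto
  have h1: "\<And>a b. a \<in> E \<Longrightarrow> b \<in> E \<Longrightarrow> \<sigma>1 (a+b) = \<sigma>1 a + \<sigma>1 b \<and> \<sigma>1 (a*b) = \<sigma>1 a * \<sigma>1 b"
    and f1: "\<And>a. a \<in> F \<Longrightarrow> \<sigma>1 a = a" and b1: "bij_betw \<sigma>1 E E"
    using s1 unfolding gal_aut_def by auto
  have h2: "\<And>a b. a \<in> E \<Longrightarrow> b \<in> E \<Longrightarrow> \<sigma>2 (a+b) = \<sigma>2 a + \<sigma>2 b \<and> \<sigma>2 (a*b) = \<sigma>2 a * \<sigma>2 b"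
    and f2: "\<And>a. a \<in> F \<Longrightarrow> \<sigma>2 a = a" and b2: "bij_betw \<sigma>2 E E"
    using s2 unfolding gal_aut_def by auto
  have 0: "0 \<in> F" "0 \<in> E" using F Esf by (auto intro: sfc)
  have m1: "\<And>e. e \<in> E \<Longrightarrow> \<sigma>1 e \<in> E" and m2: "\<And>e. e \<in> E \<Longrightarrow> \<sigma>2 e \<in> E"
    using b1 b2 unfolding bij_betw_def by auto
  have nz1: "\<And>e. e \<in> E \<Longrightarrow> e \<noteq> 0 \<Longrightarrow> \<sigma>1 e \<noteq> 0"
    using b1 f1[OF 0(1)] 0(2) unfolding bij_betw_def inj_on_def by metis
  have nz2: "\<And>e. e \<in> E \<Longrightarrow> e \<noteq> 0 \<Longrightarrow> \<sigma>2 e \<noteq> 0"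
    using b2 f2[OF 0(1)] 0(2) unfolding bij_betw_def inj_on_def by metis
  have two: "\<And>x::'a. x + x = 0 \<Longrightarrow> x = 0"
    using char by (metis mult_2 mult_eq_0_iff)
  have r1F: "r1 \<notin> F"
  proof
    assume "r1 \<in> F" then have "r1 = - r1" using f2 s2r1 by metis
    then show False using two r1nz by (metis add.inverse_unique add_eq_0_iff2 eq_neg_iff_add_eq_0)
  qed
  have r2F: "r2 \<notin> F"
  proof
    assume "r2 \<in> F" then have "r2 = - r2" using f1 s1r2 by metis
    then show False using two r2nz by (metis eq_neg_iff_add_eq_0)
  qed
  have r12F: "r1 * r2 \<notin> F"
  proof
    assume "r1 * r2 \<in> F" then have "r1 * r2 = - (r1 * r2)" using f1 h1 r1E r2E s1r1 s1r2 by (metis mult_minus_right)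
    then show False using two r2nz r1nz by (metis eq_neg_iff_add_eq_0 mult_eq_0_iff)
  qed
  define Q1 where "Q1 = quad F r1"
  define Q2 where "Q2 = quad F r2"
  have Q1sf: "is_subfield Q1" unfolding Q1_def using quad_subfield F r1 a1F r1F by auto
  have Q2sf: "is_subfield Q2" unfolding Q2_def using quad_subfield F r2 a2F r2F by auto
  have Q1E: "Q1 \<subseteq> E" unfolding Q1_def using quad_least Esf FE r1E by blast
  have Q2E: "Q2 \<subseteq> E" unfolding Q2_def using quad_least Esf FE r2E by blast
  have r2Q1: "r2 \<notin> Q1"
  proof
    assume "r2 \<in> Q1"
    then obtain p q where pq: "p \<in> F" "q \<in> F" "r2 = p + q*r1" unfolding Q1_def quad_def by auto
    have pE: "p \<in> E" "q \<in> E" "q * r1 \<in> E" using pq FE r1E Esf by (auto intro: sfmult)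
    have "\<sigma>1 (p + q * r1) = p + q * r1" using h1[OF pE(1,3)] h1[OF pE(2) r1E] f1 pq s1r1 by simp
    then have "\<sigma>1 r2 = p + q * r1" using pq by simp
    then have "r2 = - r2" using pq s1r2 by simp
    then show False using two r2nz by (metis eq_neg_iff_add_eq_0)
  qed
  have EQ: "E = quad Q1 r2"
  proof -
    have "adjoin F {r1, r2} = quad Q1 r2"
    proof (rule adjoin_eqI)
      show "is_subfield (quad Q1 r2)" using quad_subfield[OF Q1sf] r2Q1 r2 a2F
        quad_base[OF F, of r1] unfolding Q1_def by auto
      show "F \<subseteq> quad Q1 r2" using quad_base[OF F, of r1] quad_base[OF Q1sf, of r2] unfolding Q1_def by auto
      show "{r1, r2} \<subseteq> quad Q1 r2" using quad_r[OF F, of r1] quad_base[OF Q1sf, of r2] quad_r[OF Q1sf, of r2]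
        unfolding Q1_def by auto
      fix L assume L: "is_subfield L" "F \<subseteq> L" "{r1, r2} \<subseteq> L"
      then have "Q1 \<subseteq> L" unfolding Q1_def using quad_least by blast
      then show "quad Q1 r2 \<subseteq> L" using quad_least L by blast
    qed
    then show ?thesis unfolding E_def .
  qed
  have E1Q: "E1 = Q1" unfolding E1_def
  proof (rule adjoin_eqI)
    show "is_subfield Q1" by fact
    show "F \<subseteq> Q1" "{r1} \<subseteq> Q1" unfolding Q1_def using quad_base[OF F] quad_r[OF F] by auto
    fix L assume L: "is_subfield L" "F \<subseteq> L" "{r1} \<subseteq> L"
    then show "Q1 \<subseteq> L" unfolding Q1_def using quad_least by blast
  qed
  have E2Q: "E2 = Q2" unfolding E2_def
  proof (rule adjoin_eqI)
    show "is_subfield Q2" by fact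
    show "F \<subseteq> Q2" "{r2} \<subseteq> Q2" unfolding Q2_def using quad_base[OF F] quad_r[OF F] by auto
    fix L assume L: "is_subfield L" "F \<subseteq> L" "{r2} \<subseteq> L"
    then show "Q2 \<subseteq> L" unfolding Q2_def using quad_least by blast
  qed
  have coordE: "\<exists>x y z w. x \<in> F \<and> y \<in> F \<and> z \<in> F \<and> w \<in> F \<and> e = x + y*r1 + z*r2 + w*(r1*r2)"
    if "e \<in> E" for e
  proof -
    obtain A B where AB: "A \<in> Q1" "B \<in> Q1" "e = A + B*r2" using \<open>e \<in> E\<close> unfolding EQ quad_def by auto
    obtain x y where xy: "x \<in> F" "y \<in> F" "A = x + y*r1" using AB(1) unfolding Q1_def quad_def by auto
    obtain z w where zw: "z \<in> F" "w \<in> F" "B = z + w*r1" using AB(2) unfolding Q1_def quad_def by auto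
    have "e = x + y*r1 + z*r2 + w*(r1*r2)" using AB xy zw by (simp add: algebra_simps)
    then show ?thesis using xy zw by blast
  qed
  have coordI: "x + y*r1 + z*r2 + w*(r1*r2) \<in> E" if "x \<in> F" "y \<in> F" "z \<in> F" "w \<in> F" for x y z w
    using that Esf FE r1E r2E by (auto intro!: sfc)
  have s1f: "\<sigma>1 (x + y*r1 + z*r2 + w*(r1*r2)) = x + y*r1 - z*r2 - w*(r1*r2)"
    if "x \<in> F" "y \<in> F" "z \<in> F" "w \<in> F" for x y z w
    using gal_lin[OF s1 Esf FE r1E r2E that] s1r1 s1r2 by simp
  have s2f: "\<sigma>2 (x + y*r1 + z*r2 + w*(r1*r2)) = x - y*r1 + z*r2 - w*(r1*r2)"
    if "x \<in> F" "y \<in> F" "z \<in> F" "w \<in> F" for x y z w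
    using gal_lin[OF s2 Esf FE r1E r2E that] s2r1 s2r2 by simp
  have s12f: "\<sigma>1 (\<sigma>2 (x + y*r1 + z*r2 + w*(r1*r2))) = x - y*r1 - z*r2 + w*(r1*r2)"
    if "x \<in> F" "y \<in> F" "z \<in> F" "w \<in> F" for x y z w
  proof -
    have "\<sigma>2 (x + y*r1 + z*r2 + w*(r1*r2)) = x + (-y)*r1 + z*r2 + (-w)*(r1*r2)"
      using s2f[OF that] by simp
    moreover have "-y \<in> F" "-w \<in> F" using that F by (auto intro: sfc)
    ultimately show ?thesis using s1f[of x "-y" z "-w"] that by simp
  qed
  have keyK1: "(e * \<sigma>1 (\<sigma>2 e) = \<sigma>1 e * \<sigma>2 e) \<longleftrightarrow> x*w = y*z"
    if xyzw: "x \<in> F" "y \<in> F" "z \<in> F" "w \<in> F" and e: "e = x + y*r1 + z*r2 + w*(r1*r2)" for e x y z w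
  proof -
    have A: "\<sigma>1 (\<sigma>2 e) = x - y*r1 - z*r2 + w*(r1*r2)" using s12f[OF xyzw] e by simp
    have B: "\<sigma>1 e = x + y*r1 - z*r2 - w*(r1*r2)" using s1f[OF xyzw] e by simp
    have C: "\<sigma>2 e = x - y*r1 + z*r2 - w*(r1*r2)" using s2f[OF xyzw] e by simp
    have "e * \<sigma>1 (\<sigma>2 e) - \<sigma>1 e * \<sigma>2 e = (2*2)*((x*w - y*z)*(r1*r2))"
      unfolding A unfolding B C unfolding e by algebra
    moreover have "(2::'a)*2 \<noteq> 0" using char by (simp only: mult_eq_0_iff) simp
    ultimately show ?thesis using r1nz r2nz by auto
  qed
  have keyK4: "(e * \<sigma>1 (\<sigma>2 e) \<in> F) \<longleftrightarrow> x*w = y*z"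
    if xyzw: "x \<in> F" "y \<in> F" "z \<in> F" "w \<in> F" and e: "e = x + y*r1 + z*r2 + w*(r1*r2)" for e x y z w
  proof -
    define P where "P = x^2 + w^2*a1*a2 - y^2*a1 - z^2*a2"
    have PF: "P \<in> F" unfolding P_def using xyzw a1F a2F F by (auto intro!: sfc)
    have eq: "e * \<sigma>1 (\<sigma>2 e) = P + 2*(x*w - y*z)*(r1*r2)"
      unfolding e s12f[OF xyzw] P_def r1[symmetric] r2[symmetric] by algebra
    show ?thesis
    proof
      assume N: "e * \<sigma>1 (\<sigma>2 e) \<in> F"
      show "x*w = y*z"
      proof (rule ccontr)
        assume ne: "x*w \<noteq> y*z"
        then have "2*(x*w - y*z) \<noteq> 0" using char by simp
        then have "r1*r2 = (e * \<sigma>1 (\<sigma>2 e) - P) / (2*(x*w - y*z))" unfolding eq by (simp add: field_simps)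
        moreover have "(e * \<sigma>1 (\<sigma>2 e) - P) / (2*(x*w - y*z)) \<in> F" using N PF xyzw F by (auto intro!: sfc)
        ultimately show False using r12F by simp
      qed
    next
      assume "x*w = y*z" then show "e * \<sigma>1 (\<sigma>2 e) \<in> F" using eq PF by simp
    qed
  qed
  have Nnz: "e * \<sigma>1 (\<sigma>2 e) \<noteq> 0" if "e \<in> E" "e \<noteq> 0" for e
    using that nz1 nz2 m2 by auto
  have fix1: "\<sigma>1 e = e \<longleftrightarrow> e \<in> Q1" if eE: "e \<in> E" for e
  proof
    assume fx: "\<sigma>1 e = e"
    obtain x y z w where c: "x \<in> F" "y \<in> F" "z \<in> F" "w \<in> F" "e = x + y*r1 + z*r2 + w*(r1*r2)"
      using coordE[OF eE] by blast
    have "(z + w*r1)*r2 + (z + w*r1)*r2 = 0" using fx s1f[OF c(1-4)] c(5) by (simp add: algebra_simps)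
    then have zw0: "z + w*r1 = 0" using two[of "(z + w*r1)*r2"] r2nz by (metis mult_eq_0_iff)
    have "w = 0"
    proof (rule ccontr)
      assume "w \<noteq> 0"
      then have "r1 = -z/w" using zw0 by (simp add: field_simps eq_neg_iff_add_eq_0)
      then have "r1 \<in> F" using c F by (auto intro!: sfc)
      then show False using r1F by simp
    qed
    then have "z = 0" using zw0 by simp
    then show "e \<in> Q1" using c \<open>w = 0\<close> unfolding Q1_def quad_def by auto
  next
    assume "e \<in> Q1"
    then obtain p q where pq: "p \<in> F" "q \<in> F" "e = p + q*r1" unfolding Q1_def quad_def by auto
    then show "\<sigma>1 e = e" using s1f[of p q 0 0] 0 by simp
  qed
  have fix2: "\<sigma>2 e = e \<longleftrightarrow> e \<in> Q2" if eE: "e \<in> E" for e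
  proof
    assume fx: "\<sigma>2 e = e"
    obtain x y z w where c: "x \<in> F" "y \<in> F" "z \<in> F" "w \<in> F" "e = x + y*r1 + z*r2 + w*(r1*r2)"
      using coordE[OF eE] by blast
    have "(y + w*r2)*r1 + (y + w*r2)*r1 = 0" using fx s2f[OF c(1-4)] c(5) by (simp add: algebra_simps)
    then have yw0: "y + w*r2 = 0" using two[of "(y + w*r2)*r1"] r1nz by (metis mult_eq_0_iff)
    have "w = 0"
    proof (rule ccontr)
      assume "w \<noteq> 0"
      then have "r2 = -y/w" using yw0 by (simp add: field_simps eq_neg_iff_add_eq_0)
      then have "r2 \<in> F" using c F by (auto intro!: sfc)
      then show False using r2F by simp
    qed
    then have "y = 0" using yw0 by simp
    then show "e \<in> Q2" using c \<open>w = 0\<close> unfolding Q2_def quad_def by auto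
  next
    assume "e \<in> Q2"
    then obtain p q where pq: "p \<in> F" "q \<in> F" "e = p + q*r2" unfolding Q2_def quad_def by auto
    then show "\<sigma>2 e = e" using s2f[of p 0 q 0] 0 by simp
  qed
  have ker1: "ker1m E \<sigma>1 = units_of_field Q1"
    unfolding ker1m_def units_of_field_def using fix1 Q1E by (auto simp: divide_eq_1_iff) (metis subsetD)+
  have ker2: "ker1m E \<sigma>2 = units_of_field Q2"
    unfolding ker1m_def units_of_field_def using fix2 Q2E by (auto simp: divide_eq_1_iff) (metis subsetD)+
  have K1K2: "{e \<in> units_of_field E. e * \<sigma>1 (\<sigma>2 e) = \<sigma>1 e * \<sigma>2 e} = set_mult (units_of_field Q1) (units_of_field Q2)"
  proof (intro equalityI subsetI)
    fix e assume "e \<in> {e \<in> units_of_field E. e * \<sigma>1 (\<sigma>2 e) = \<sigma>1 e * \<sigma>2 e}"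
    then have eE: "e \<in> E" "e \<noteq> 0" and K: "e * \<sigma>1 (\<sigma>2 e) = \<sigma>1 e * \<sigma>2 e" unfolding units_of_field_def by auto
    obtain x y z w where c: "x \<in> F" "y \<in> F" "z \<in> F" "w \<in> F" "e = x + y*r1 + z*r2 + w*(r1*r2)"
      using coordE[OF eE(1)] by blast
    have xw: "x*w = y*z" using keyK1[OF c] K by simp
    have "\<exists>u v. u \<in> Q1 \<and> v \<in> Q2 \<and> e = u * v"
    proof (cases "x = 0")
      case False
      have "e = (1 + (y/x)*r1) * (x + z*r2)" using c(5) xw False
        by (simp add: field_simps)
      moreover have "1 \<in> F" "y/x \<in> F" using c F by (auto intro: sfc)
      then have "1 + (y/x)*r1 \<in> Q1" "x + z*r2 \<in> Q2" using c unfolding Q1_def Q2_def quad_def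
        by blast+
      ultimately show ?thesis by blast
    next
      case x0: True
      show ?thesis
      proof (cases "y = 0")
        case False
        then have "z = 0" using xw x0 by simp
        then have "e = r1 * (y + w*r2)" using c(5) x0 by (simp add: algebra_simps)
        moreover have "r1 \<in> Q1" "y + w*r2 \<in> Q2" using c F quad_r unfolding Q1_def Q2_def quad_def
          by (auto intro!: sfc)
        ultimately show ?thesis by blast
      next
        case True
        then have "e = (z + w*r1) * r2" using c(5) x0 by (simp add: algebra_simps)
        moreover have "r2 \<in> Q2" "z + w*r1 \<in> Q1" using c F quad_r unfolding Q1_def Q2_def quad_def
          by (auto intro!: sfc)
        ultimately show ?thesis by blast
      qed
    qed
    then obtain u v where "u \<in> Q1" "v \<in> Q2" "e = u*v" by blast
    then show "e \<in> set_mult (units_of_field Q1) (units_of_field Q2)"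
      unfolding set_mult_def units_of_field_def using eE by auto
  next
    fix e assume "e \<in> set_mult (units_of_field Q1) (units_of_field Q2)"
    then obtain u v where uv: "u \<in> Q1" "v \<in> Q2" "u \<noteq> 0" "v \<noteq> 0" "e = u*v"
      unfolding set_mult_def units_of_field_def by auto
    obtain p q where pq: "p \<in> F" "q \<in> F" "u = p + q*r1" using uv unfolding Q1_def quad_def by auto
    obtain s t where st: "s \<in> F" "t \<in> F" "v = s + t*r2" using uv unfolding Q2_def quad_def by auto
    have c: "p*s \<in> F" "q*s \<in> F" "p*t \<in> F" "q*t \<in> F" using pq st F by (auto intro: sfc)
    have e: "e = p*s + (q*s)*r1 + (p*t)*r2 + (q*t)*(r1*r2)" using uv pq st by (simp add: algebra_simps)
    have "e * \<sigma>1 (\<sigma>2 e) = \<sigma>1 e * \<sigma>2 e" using keyK1[OF c e] by simp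
    moreover have "e \<in> E" "e \<noteq> 0" using coordI[OF c] e uv by auto
    ultimately show "e \<in> {e \<in> units_of_field E. e * \<sigma>1 (\<sigma>2 e) = \<sigma>1 e * \<sigma>2 e}"
      unfolding units_of_field_def by auto
  qed
  have K1K4: "{e \<in> units_of_field E. e * \<sigma>1 (\<sigma>2 e) = \<sigma>1 e * \<sigma>2 e} = {e \<in> units_of_field E. e * \<sigma>1 (\<sigma>2 e) \<in> units_of_field F}"
  proof -
    have "e * \<sigma>1 (\<sigma>2 e) = \<sigma>1 e * \<sigma>2 e \<longleftrightarrow> e * \<sigma>1 (\<sigma>2 e) \<in> units_of_field F"
      if eE: "e \<in> E" "e \<noteq> 0" for e
    proof -
      obtain x y z w where c: "x \<in> F" "y \<in> F" "z \<in> F" "w \<in> F" "e = x + y*r1 + z*r2 + w*(r1*r2)"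
        using coordE[OF eE(1)] by blast
      show ?thesis using keyK1[OF c] keyK4[OF c] Nnz[OF eE] unfolding units_of_field_def by auto
    qed
    then show ?thesis unfolding units_of_field_def by auto
  qed
  have norm1: "u * \<sigma>2 u \<in> units_of_field F" if uU: "u \<in> units_of_field Q1" for u
  proof -
    obtain p q where pq: "p \<in> F" "q \<in> F" "u = p + q*r1" "u \<noteq> 0" using uU unfolding Q1_def quad_def units_of_field_def by auto
    have "\<sigma>2 u = p - q*r1" using s2f[of p q 0 0] 0 pq by simp
    then have "u * \<sigma>2 u = (p + q*r1) * (p - q*r1)" by (simp only: pq(3))
    also have "... = p^2 - q^2*a1" unfolding r1[symmetric] by algebra
    finally have "u * \<sigma>2 u = p^2 - q^2*a1" .
    moreover have "p^2 - q^2*a1 \<in> F" using pq a1F F by (auto intro!: sfc)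
    moreover have "u * \<sigma>2 u \<noteq> 0" using nz2 pq uU Q1E unfolding units_of_field_def by auto
    ultimately show ?thesis unfolding units_of_field_def by auto
  qed
  have norm2: "u * \<sigma>1 u \<in> units_of_field F" if uU: "u \<in> units_of_field Q2" for u
  proof -
    obtain p q where pq: "p \<in> F" "q \<in> F" "u = p + q*r2" "u \<noteq> 0" using uU unfolding Q2_def quad_def units_of_field_def by auto
    have "\<sigma>1 u = p - q*r2" using s1f[of p 0 q 0] 0 pq by simp
    then have "u * \<sigma>1 u = (p + q*r2) * (p - q*r2)" by (simp only: pq(3))
    also have "... = p^2 - q^2*a2" unfolding r2[symmetric] by algebra
    finally have "u * \<sigma>1 u = p^2 - q^2*a2" .
    moreover have "p^2 - q^2*a2 \<in> F" using pq a2F F by (auto intro!: sfc)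
    moreover have "u * \<sigma>1 u \<noteq> 0" using nz1 pq uU Q2E unfolding units_of_field_def by auto
    ultimately show ?thesis unfolding units_of_field_def by auto
  qed
  have K4K5: "{e \<in> units_of_field E. e * \<sigma>1 (\<sigma>2 e) \<in> units_of_field F} =
     {e \<in> units_of_field E. e * \<sigma>1 (\<sigma>2 e) \<in>
                 set_mult ((\<lambda>x. x * \<sigma>2 x) ` units_of_field Q1)
                          ((\<lambda>x. x * \<sigma>1 x) ` units_of_field Q2)}"
  proof (intro equalityI subsetI)
    fix e assume eK4: "e \<in> {e \<in> units_of_field E. e * \<sigma>1 (\<sigma>2 e) \<in> units_of_field F}"
    then have "e \<in> set_mult (units_of_field Q1) (units_of_field Q2)" using K1K4 K1K2 by auto
    then obtain u v where uv: "u \<in> units_of_field Q1" "v \<in> units_of_field Q2" "e = u*v"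
      unfolding set_mult_def by auto
    obtain p q where pq: "p \<in> F" "q \<in> F" "u = p + q*r1" using uv unfolding Q1_def quad_def units_of_field_def by auto
    obtain s t where st: "s \<in> F" "t \<in> F" "v = s + t*r2" using uv unfolding Q2_def quad_def units_of_field_def by auto
    have c: "p*s \<in> F" "q*s \<in> F" "p*t \<in> F" "q*t \<in> F" using pq st F by (auto intro: sfc)
    have e: "e = p*s + (q*s)*r1 + (p*t)*r2 + (q*t)*(r1*r2)" using uv pq st by (simp add: algebra_simps)
    have su: "\<sigma>2 u = p - q*r1" using s2f[of p q 0 0] 0 pq by simp
    have sv: "\<sigma>1 v = s - t*r2" using s1f[of s 0 t 0] 0 st by simp
    have A: "\<sigma>1 (\<sigma>2 e) = p*s - (q*s)*r1 - (p*t)*r2 + (q*t)*(r1*r2)" using s12f[OF c] e by simp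
    have "e * \<sigma>1 (\<sigma>2 e) = (u * \<sigma>2 u) * (v * \<sigma>1 v)"
      unfolding A su sv unfolding e pq(3) st(3) by algebra
    then have "e * \<sigma>1 (\<sigma>2 e) \<in> set_mult ((\<lambda>x. x * \<sigma>2 x) ` units_of_field Q1) ((\<lambda>x. x * \<sigma>1 x) ` units_of_field Q2)"
      unfolding set_mult_def using uv by blast
    then show "e \<in> {e \<in> units_of_field E. e * \<sigma>1 (\<sigma>2 e) \<in> set_mult ((\<lambda>x. x * \<sigma>2 x) ` units_of_field Q1) ((\<lambda>x. x * \<sigma>1 x) ` units_of_field Q2)}"
      using eK4 by auto
  next
    fix e assume eK5: "e \<in> {e \<in> units_of_field E. e * \<sigma>1 (\<sigma>2 e) \<in> set_mult ((\<lambda>x. x * \<sigma>2 x) ` units_of_field Q1) ((\<lambda>x. x * \<sigma>1 x) ` units_of_field Q2)}"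
    then obtain u v where uv: "u \<in> units_of_field Q1" "v \<in> units_of_field Q2" "e * \<sigma>1 (\<sigma>2 e) = (u * \<sigma>2 u) * (v * \<sigma>1 v)"
      unfolding set_mult_def by auto
    have "e * \<sigma>1 (\<sigma>2 e) \<in> units_of_field F" using uv norm1 norm2 units_mult[OF F] by metis
    then show "e \<in> {e \<in> units_of_field E. e * \<sigma>1 (\<sigma>2 e) \<in> units_of_field F}" using eK5 by auto
  qed
  show ?thesis unfolding Let_def E1Q E2Q ker1 ker2 gen_prod[OF Q1sf Q2sf]
    using K1K2 K1K4 K4K5 by simp
qed

end
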